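(* For any discrete random variables $U,V$, where $U$ has finite support $\mathcal{U}$, and any $\alpha>0$, $$\Pr\left(|h(V|U)-h(V)|>\alpha\right)<(|\mathcal{U}|+1)2^{-\alpha}.$$
   Context: $h(V|U)=-\log_2 p_{V|U}(V|U)$ and $h(V)=-\log_2 p_V(V)$ (random variables). *)

theory Defs
  imports "HOL-Probability.Probability"
begin

definition rv_pmf :: "'a measure \<Rightarrow> ('a \<Rightarrow> 'b) \<Rightarrow> 'b \<Rightarrow> real" where
  "rv_pmf M X x = measure M {\<omega> \<in> space M. X \<omega> = x}"

definition rv_joint_pmf :: "'a measure \<Rightarrow> ('a \<Rightarrow> 'u) \<Rightarrow> ('a \<Rightarrow> 'v) \<Rightarrow> 'u \<Rightarrow> 'v \<Rightarrow> real" where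
  "rv_joint_pmf M U V u v = measure M {\<omega> \<in> space M. U \<omega> = u \<and> V \<omega> = v}"

definition rv_cond_pmf :: "'a measure \<Rightarrow> ('a \<Rightarrow> 'u) \<Rightarrow> ('a \<Rightarrow> 'v) \<Rightarrow> 'v \<Rightarrow> 'u \<Rightarrow> real" where
  "rv_cond_pmf M U V v u = rv_joint_pmf M U V u v / rv_pmf M U u"

definition rv_support :: "'a measure \<Rightarrow> ('a \<Rightarrow> 'b) \<Rightarrow> 'b set" where
  "rv_support M X = {x. rv_pmf M X x > 0}"

definition info_h :: "'a measure \<Rightarrow> ('a \<Rightarrow> 'v) \<Rightarrow> 'a \<Rightarrow> real" where
  "info_h M V \<omega> = - log 2 (rv_pmf M V (V \<omega>))"

definition info_h_cond :: "'a measure \<Rightarrow> ('a \<Rightarrow> 'u) \<Rightarrow> ('a \<Rightarrow> 'v) \<Rightarrow> 'a \<Rightarrow> real" where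
  "info_h_cond M U V \<omega> = - log 2 (rv_cond_pmf M U V (V \<omega>) (U \<omega>))"

end

theory Submission imports Defs begin

lemma L:
  fixes N N' :: "('c::countable) measure"
  assumes "sets N = sets (count_space UNIV)" "sets N' = sets (count_space UNIV)"
    "finite_measure N" "finite_measure N'" "c \<ge> 0"
    "\<And>x. x\<in>A \<Longrightarrow> measure N {x} \<le> c * measure N' {x}"
  shows "measure N A \<le> c * measure N' A"
proof -
  have "emeasure N A = (\<integral>\<^sup>+x. emeasure N {x} \<partial>count_space A)"
    by (rule emeasure_countable_singleton) (use assms in auto)
  also have "\<dots> \<le> (\<integral>\<^sup>+x. ennreal c * emeasure N' {x} \<partial>count_space A)"
    by (intro nn_integral_mono) (use assms in \<open>auto simp: finite_measure.emeasure_eq_measure ennreal_mult[symmetric] intro!: ennreal_leI\<close>)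
  also have "\<dots> = ennreal c * emeasure N' A"
    by (subst nn_integral_cmult) (use assms in \<open>auto intro!: emeasure_countable_singleton[symmetric] arg_cong2[where f="(*)"]\<close>)
  finally have "ennreal (measure N A) \<le> ennreal (c * measure N' A)"
    using assms by (simp add: finite_measure.emeasure_eq_measure ennreal_mult)
  thus ?thesis using assms by (simp add: ennreal_le_iff)
qed

lemma L2:
  fixes N N' :: "('c::countable) measure"
  assumes "sets N = sets (count_space UNIV)" "sets N' = sets (count_space UNIV)"
    "finite_measure N" "finite_measure N'" "c \<ge> 0"
    "\<And>x. x\<in>A \<Longrightarrow> measure N {x} \<le> c * measure N' {x}"
    "x0 \<in> A" "measure N {x0} < c * measure N' {x0}"
  shows "measure N A < c * measure N' A"
proof -
  have d: "A = {x0} \<union> (A - {x0})" using assms by auto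
  have "measure N A = measure N {x0} + measure N (A - {x0})"
    by (subst d, rule finite_measure.finite_measure_Union) (use assms in auto)
  moreover have "measure N' A = measure N' {x0} + measure N' (A - {x0})"
    by (subst d, rule finite_measure.finite_measure_Union) (use assms in auto)
  moreover have "measure N (A - {x0}) \<le> c * measure N' (A - {x0})"
    by (rule L) (use assms in auto)
  ultimately show ?thesis using assms(8) by (simp add: distrib_left)
qed

theorem lemma30:
  fixes M :: "'a measure" and U :: "'a \<Rightarrow> 'u::countable" and V :: "'a \<Rightarrow> 'v::countable"
    and \<alpha> :: real
  assumes "prob_space M"
    and "U \<in> measurable M (count_space UNIV)"
    and "V \<in> measurable M (count_space UNIV)"
    and "finite (rv_support M U)"
    and "\<alpha> > 0"
  shows "measure M {\<omega> \<in> space M. \<bar>info_h_cond M U V \<omega> - info_h M V \<omega>\<bar> > \<alpha>}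
           < (real (card (rv_support M U)) + 1) * 2 powr (- \<alpha>)"
proof -
  interpret P: prob_space M by fact
  define p where "p = rv_joint_pmf M U V"
  define pU where "pU = rv_pmf M U"
  define pV where "pV = rv_pmf M V"
  define a :: real where "a = 2 powr (- \<alpha>)"
  define S where "S = rv_support M U"
  have a_pos: "a > 0" unfolding a_def by simp
  have UVm: "(\<lambda>\<omega>. (U \<omega>, V \<omega>)) \<in> measurable M (count_space UNIV)"
  proof -
    have "(\<lambda>\<omega>. (U \<omega>, V \<omega>)) \<in> measurable M (count_space UNIV \<Otimes>\<^sub>M count_space UNIV)"
      using assms(2,3) by measurable
    thus ?thesis by (simp add: pair_measure_countable[OF countableI_type countableI_type])
  qed
  define N where "N = distr M (count_space UNIV) (\<lambda>\<omega>. (U \<omega>, V \<omega>))"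
  have sN: "sets N = sets (count_space UNIV)" unfolding N_def by simp
  have fN: "finite_measure N" unfolding N_def
    by (intro prob_space.finite_measure prob_space.prob_space_distr[OF assms(1)] UVm)
  have mN: "measure N A = measure M {\<omega>\<in>space M. (U \<omega>, V \<omega>) \<in> A}" for A
    unfolding N_def by (subst measure_distr[OF UVm]) (auto intro!: arg_cong[where f="measure M"])
  have mN1: "measure N {(u,v)} = p u v" for u v
    unfolding mN p_def rv_joint_pmf_def by (auto intro!: arg_cong[where f="measure M"])
  have p_nn: "p u v \<ge> 0" for u v unfolding p_def rv_joint_pmf_def by simp
  have Um: "{\<omega>\<in>space M. U \<omega> = u} \<in> sets M" for u
    using assms(2) by measurable
  have Vm: "{\<omega>\<in>space M. V \<omega> = v} \<in> sets M" for v
    using assms(3) by measurable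
  have p_le_U: "p u v \<le> pU u" for u v
    unfolding p_def pU_def rv_joint_pmf_def rv_pmf_def
    by (rule P.finite_measure_mono) (use Um in auto)
  have p_le_V: "p u v \<le> pV v" for u v
    unfolding p_def pV_def rv_joint_pmf_def rv_pmf_def
    by (rule P.finite_measure_mono) (use Vm in auto)
  have pU_sum: "measure N ({u} \<times> UNIV) = pU u" for u
    unfolding mN pU_def rv_pmf_def by (auto intro!: arg_cong[where f="measure M"])
  define DU where "DU = distr M (count_space UNIV) U"
  define DV where "DV = distr M (count_space UNIV) V"
  define N' where "N' = DU \<Otimes>\<^sub>M DV"
  have pDU: "prob_space DU" unfolding DU_def by (rule P.prob_space_distr[OF assms(2)])
  have pDV: "prob_space DV" unfolding DV_def by (rule P.prob_space_distr[OF assms(3)])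
  have pN': "prob_space N'" unfolding N'_def using pDU pDV
    by (simp add: pair_prob_space.intro pair_sigma_finite.intro prob_space_imp_sigma_finite prob_space_pair)
  have sN': "sets N' = sets (count_space UNIV)"
  proof -
    have "sets (distr M (count_space UNIV) U \<Otimes>\<^sub>M distr M (count_space UNIV) V)
        = sets ((count_space UNIV :: 'u measure) \<Otimes>\<^sub>M (count_space UNIV :: 'v measure))"
      by (rule sets_pair_measure_cong) simp_all
    moreover have "(count_space UNIV :: 'u measure) \<Otimes>\<^sub>M (count_space UNIV :: 'v measure) = count_space UNIV"
      using pair_measure_countable[OF countableI_type countableI_type, of "UNIV::'u set" "UNIV :: 'v set"] by simp
    ultimately show ?thesis unfolding N'_def DU_def DV_def by (metis sets_count_space)
  qed
  have mN'1: "measure N' {(u,v)} = pU u * pV v" for u v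
  proof -
    have "emeasure N' ({u} \<times> {v}) = emeasure DU {u} * emeasure DV {v}"
      unfolding N'_def
      by (rule sigma_finite_measure.emeasure_pair_measure_Times)
        (use pDU pDV prob_space_imp_sigma_finite in \<open>auto simp: DU_def DV_def\<close>)
    moreover have "measure DU {u} = pU u" unfolding DU_def pU_def rv_pmf_def
      by (subst measure_distr[OF assms(2)]) (auto intro!: arg_cong[where f="measure M"])
    moreover have "measure DV {v} = pV v" unfolding DV_def pV_def rv_pmf_def
      by (subst measure_distr[OF assms(3)]) (auto intro!: arg_cong[where f="measure M"])
    ultimately show ?thesis
      by (simp add: measure_def enn2real_mult)
  qed
  have N'_le1: "measure N' A \<le> 1" for A using pN' by (simp add: prob_space.prob_le_1)
  have fN': "finite_measure N'" using pN' by (simp add: prob_space.finite_measure)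
  define W where "W = {(u,v). \<bar>- log 2 (p u v / pU u) - - log 2 (pV v)\<bar> > \<alpha>}"
  define Z where "Z = {(u,v). p u v = 0}"
  define T1 where "T1 = {(u,v). p u v < a * (pU u * pV v)}"
  define T2 where "T2 = {(u,v). pU u > 0 \<and> p u v > 2 powr \<alpha> * (pU u * pV v)}"
  have E: "{\<omega> \<in> space M. \<bar>info_h_cond M U V \<omega> - info_h M V \<omega>\<bar> > \<alpha>}
      = {\<omega>\<in>space M. (U \<omega>, V \<omega>) \<in> W}"
    unfolding W_def info_h_cond_def info_h_def rv_cond_pmf_def p_def pU_def pV_def by auto
  have WZ: "W \<subseteq> Z \<union> T1 \<union> T2"
  proof
    fix x assume "x \<in> W"
    obtain u v where x: "x = (u,v)" by fastforce
    show "x \<in> Z \<union> T1 \<union> T2"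
    proof (cases "p u v = 0")
      case True thus ?thesis using x Z_def by auto
    next
      case False
      hence pp: "p u v > 0" using p_nn[of u v] by linarith
      hence pu: "pU u > 0" and pv: "pV v > 0" using p_le_U[of u v] p_le_V[of u v] by linarith+
      have eq: "- log 2 (p u v / pU u) - - log 2 (pV v) = log 2 (pU u * pV v) - log 2 (p u v)"
        using pp pu pv by (simp add: log_divide log_mult)
      from \<open>x\<in>W\<close> have "\<bar>log 2 (pU u * pV v) - log 2 (p u v)\<bar> > \<alpha>"
        unfolding W_def x eq[symmetric] by simp
      hence "log 2 (pU u * pV v) > log 2 (p u v) + \<alpha> \<or> log 2 (p u v) > log 2 (pU u * pV v) + \<alpha>"
        by linarith
      thus ?thesis
      proof
        assume h: "log 2 (pU u * pV v) > log 2 (p u v) + \<alpha>"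
        have "log 2 (p u v) + \<alpha> = log 2 (p u v * 2 powr \<alpha>)" using pp by (simp add: log_mult)
        with h have "p u v * 2 powr \<alpha> < pU u * pV v" using pp pu pv by simp
        hence "p u v * 2 powr \<alpha> * a < pU u * pV v * a" using a_pos by simp
        moreover have one: "2 powr \<alpha> * a = 1" unfolding a_def by (simp add: powr_add[symmetric])
        moreover have "p u v * 2 powr \<alpha> * a = p u v" by (simp add: mult.assoc one)
        ultimately have "p u v < a * (pU u * pV v)" by (metis mult.commute)
        thus ?thesis using x T1_def by auto
      next
        assume h: "log 2 (p u v) > log 2 (pU u * pV v) + \<alpha>"
        have "log 2 (pU u * pV v) + \<alpha> = log 2 (pU u * pV v * 2 powr \<alpha>)" using pu pv by (simp add: log_mult)
        with h have "p u v > pU u * pV v * 2 powr \<alpha>" using pp pu pv by simp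
        thus ?thesis using x T2_def pu by (auto simp: algebra_simps)
      qed
    qed
  qed
  have "measure M {\<omega> \<in> space M. \<bar>info_h_cond M U V \<omega> - info_h M V \<omega>\<bar> > \<alpha>} = measure N W"
    unfolding E mN ..
  also have "\<dots> \<le> measure N (Z \<union> T1 \<union> T2)"
    by (rule finite_measure.finite_measure_mono[OF fN WZ]) (simp add: sN)
  also have "\<dots> \<le> measure N Z + measure N T1 + measure N T2"
    by (metis measure_Un_le sN sets.Un UNIV_I sets_count_space Pow_UNIV add_right_mono order_trans)
  also have "measure N Z \<le> 0"
    using L[OF sN sN fN fN, of 0 Z] by (auto simp: Z_def mN1)
  also have "measure N T1 < a"
  proof (cases "\<exists>x\<in>T1. p (fst x) (snd x) > 0")
    case True
    then obtain x0 where x0: "x0 \<in> T1" "p (fst x0) (snd x0) > 0" by blast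
    have "measure N T1 < a * measure N' T1"
      by (rule L2[OF sN sN' fN fN' _ _ x0(1)])
        (use a_pos x0 in \<open>auto simp: T1_def mN1 mN'1 less_imp_le\<close>)
    also have "\<dots> \<le> a" using N'_le1[of T1] a_pos by (simp add: mult_left_le)
    finally show ?thesis .
  next
    case False
    have "measure N T1 \<le> 0 * measure N T1"
      by (rule L[OF sN sN fN fN]) (use False p_nn in \<open>auto simp: mN1 less_le\<close>)
    thus ?thesis using a_pos by simp
  qed
  also have "measure N T2 \<le> real (card S) * a"
  proof -
    define T2u where "T2u u = T2 \<inter> ({u} \<times> UNIV)" for u
    have "T2 = (\<Union>u\<in>S. T2u u)"
      unfolding T2u_def S_def rv_support_def T2_def pU_def by auto
    hence "measure N T2 \<le> (\<Sum>u\<in>S. measure N (T2u u))"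
      using measure_UNION_le[of S "T2u" N] assms(4) sN by (simp add: S_def)
    also have "\<dots> \<le> (\<Sum>u\<in>S. a)"
    proof (rule sum_mono)
      fix u assume "u \<in> S"
      hence pu: "pU u > 0" unfolding S_def rv_support_def pU_def by simp
      define Nu where "Nu = distr M (count_space UNIV) (\<lambda>\<omega>. (u, V \<omega>))"
      have Vum: "(\<lambda>\<omega>. (u, V \<omega>)) \<in> measurable M (count_space UNIV)"
      proof -
        have "(\<lambda>\<omega>. (u, V \<omega>)) \<in> measurable M (count_space UNIV \<Otimes>\<^sub>M count_space UNIV)"
          using assms(3) by measurable
        thus ?thesis by (simp add: pair_measure_countable[OF countableI_type countableI_type])
      qed
      have sNu: "sets Nu = sets (count_space UNIV)" unfolding Nu_def by simp
      have fNu: "finite_measure Nu" unfolding Nu_def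
        by (intro prob_space.finite_measure prob_space.prob_space_distr[OF assms(1)] Vum)
      have mNu1: "measure Nu {(u,v)} = pV v" for v
        unfolding Nu_def pV_def rv_pmf_def
        by (subst measure_distr[OF Vum]) (auto intro!: arg_cong[where f="measure M"])
      have "measure N (T2u u) \<le> 1 * measure Nu (T2u u)"
        by (rule L[OF sN sNu fN fNu]) (auto simp: T2u_def mN1 mNu1 p_le_V)
      also have "\<dots> = measure Nu (T2u u)" by simp
      also have "\<dots> \<le> (a / pU u) * measure N (T2u u)"
      proof (rule L[OF sNu sN fNu fN])
        show "0 \<le> a / pU u" using a_pos pu by simp
        fix x assume "x \<in> T2u u"
        then obtain v where x: "x = (u,v)" and h: "p u v > 2 powr \<alpha> * (pU u * pV v)"
          unfolding T2u_def T2_def by auto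
        have "2 powr \<alpha> * a = 1" unfolding a_def by (simp add: powr_add[symmetric])
        have "pV v = (2 powr \<alpha> * a) * pV v" using \<open>2 powr \<alpha> * a = 1\<close> by simp
        also have "\<dots> = a / pU u * (2 powr \<alpha> * (pU u * pV v))" using pu by (simp add: field_simps)
        also have "\<dots> \<le> a / pU u * p u v" using h a_pos pu by (intro mult_left_mono) auto
        finally show "measure Nu {x} \<le> a / pU u * measure N {x}" by (simp add: x mNu1 mN1)
      qed
      also have "\<dots> \<le> (a / pU u) * pU u"
      proof -
        have "measure N (T2u u) \<le> measure N ({u} \<times> UNIV)"
          by (rule finite_measure.finite_measure_mono[OF fN]) (auto simp: T2u_def sN)
        thus ?thesis using pU_sum[of u] a_pos pu by (intro mult_left_mono) auto
      qed
      also have "\<dots> = a" using pu by simp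
      finally show "measure N (T2u u) \<le> a" .
    qed
    finally show ?thesis by simp
  qed
  finally show ?thesis unfolding S_def a_def by (simp add: algebra_simps)
qed

end
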